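(* Let $X$ be a non-empty complete computable metric space. Then $\mathsf{BCT}_X\equiv_W\mathsf{C_{\mathbb N}}$.
   Context: A represented space is a pair $(X,\delta_X)$ with $\delta_X:\subseteq\mathbb N^{\mathbb N}\to X$ a partial surjection. For a partial multi-valued map $f:\subseteq X\rightrightarrows Y$ between represented spaces, a realizer of $f$ is a partial function $F:\subseteq\mathbb N^{\mathbb N}\to\mathbb N^{\mathbb N}$ with $\delta_Y(F(p))\in f(\delta_X(p))$ for all $p\in\mathrm{dom}(f\circ\delta_X)$. We write $f\le_W g$ (Weihrauch reducibility) if there are computable partial functions $H,K:\subseteq\mathbb N^{\mathbb N}\to\mathbb N^{\mathbb N}$ such that for every realizer $G$ of $g$ the function $p\mapsto H\langle p,G(K(p))\rangle$ is a realizer of $f$, where $\langle\cdot,\cdot\rangle$ is a standard computable pairing on $\mathbb N^{\mathbb N}$. $\equiv_W$ is the induced equivalence. For a computable metric space $X$, $\mathcal A_-(X)$ is the set of closed subsets of $X$, where a name of $A$ is an enumeration of rational open balls (centers from the dense sequence, rational radii) whose union is $X\setminus A$; for $X=\mathbb N$: $p$ names $A$ iff $\mathbb N\setminus A=\{n:n+1\in\mathrm{range}(p)\}$. Sequences in $\mathcal A_-(X)^{\mathbb N}$ are represented by tupling names. $\mathsf{C_{\mathbb N}}:\subseteq\mathcal A_-(\mathbb N)\rightrightarrows\mathbb N$, $A\mapsto A$, on non-empty $A$. $\mathsf{BCT}_X:\subseteq\mathcal A_-(X)^{\mathbb N}\rightrightarrows\mathbb N$, $(A_i)_{i}\mapsto\{n\in\mathbb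 N: A_n\text{ has non-empty interior}\}$, defined on all sequences of closed sets with $\bigcup_i A_i=X$. *)

theory Defs
  imports "HOL-Analysis.Analysis" "HOL-Library.Nat_Bijection"
begin

fun prec :: "(nat list \<Rightarrow> nat option) \<Rightarrow> (nat list \<Rightarrow> nat option) \<Rightarrow> nat \<Rightarrow> nat list \<Rightarrow> nat option"
  where
  "prec g h 0 ys = g ys"
| "prec g h (Suc k) ys = (case prec g h k ys of None \<Rightarrow> None | Some r \<Rightarrow> h (k # r # ys))"

definition mu :: "(nat list \<Rightarrow> nat option) \<Rightarrow> nat list \<Rightarrow> nat option" where
  "mu f xs = (if \<exists>y. f (y # xs) = Some 0 \<and> (\<forall>z<y. \<exists>v. f (z # xs) = Some v \<and> v \<noteq> 0)
              then Some (LEAST y. f (y # xs) = Some 0 \<and> (\<forall>z<y. \<exists>v. f (z # xs) = Some v \<and> v \<noteq> 0))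
              else None)"

text \<open>partrec n f: f, restricted to argument lists of length n, is an n-ary partial recursive function.\<close>
inductive partrec :: "nat \<Rightarrow> (nat list \<Rightarrow> nat option) \<Rightarrow> bool" where
  pr_zero: "partrec n (\<lambda>xs. Some 0)"
| pr_succ: "partrec 1 (\<lambda>xs. Some (Suc (hd xs)))"
| pr_proj: "i < n \<Longrightarrow> partrec n (\<lambda>xs. Some (xs ! i))"
| pr_comp: "partrec m f \<Longrightarrow> length gs = m \<Longrightarrow> (\<forall>g\<in>set gs. partrec n g) \<Longrightarrow>
     partrec n (\<lambda>xs. if (\<forall>g\<in>set gs. g xs \<noteq> None) then f (map (\<lambda>g. the (g xs)) gs) else None)"
| pr_prec: "partrec n g \<Longrightarrow> partrec (n + 2) h \<Longrightarrow> partrec (n + 1) (\<lambda>xs. prec g h (hd xs) (tl xs))"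
| pr_mu: "partrec (n + 1) f \<Longrightarrow> partrec n (mu f)"
| pr_ext: "partrec n f \<Longrightarrow> (\<forall>xs. length xs = n \<longrightarrow> g xs = f xs) \<Longrightarrow> partrec n g"

definition computable_nat_fun :: "(nat \<Rightarrow> nat option) \<Rightarrow> bool" where
  "computable_nat_fun h \<longleftrightarrow> partrec 1 (\<lambda>xs. h (hd xs))"

type_synonym baire = "nat \<Rightarrow> nat"

definition prefix_code :: "baire \<Rightarrow> nat \<Rightarrow> nat" where
  "prefix_code p k = list_encode (map p [0..<k])"

text \<open>F is computable iff there is a computable e such that, for p in dom F, F(p)(i) is the
  (unique) value e(i, code of p|k) for those k where it is defined, and such k exist.
  (Equivalent to computability by a Type-2 machine on dom F.)\<close>
definition computable_baire :: "(baire \<Rightarrow> baire option) \<Rightarrow> bool" where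
  "computable_baire F \<longleftrightarrow> (\<exists>e. computable_nat_fun e \<and>
     (\<forall>p q. F p = Some q \<longrightarrow>
        (\<forall>i. (\<exists>k. e (prod_encode (i, prefix_code p k)) \<noteq> None) \<and>
             (\<forall>k v. e (prod_encode (i, prefix_code p k)) = Some v \<longrightarrow> v = q i))))"

definition bpair :: "baire \<Rightarrow> baire \<Rightarrow> baire" where
  "bpair p q = (\<lambda>n. if even n then p (n div 2) else q (n div 2))"

text \<open>A partial multi-valued map is given by a domain D and a value function f.
  Representations are partial maps baire \<Rightarrow> 'a option.\<close>
definition realizer ::
  "(baire \<Rightarrow> 'x option) \<Rightarrow> (baire \<Rightarrow> 'y option) \<Rightarrow> 'x set \<Rightarrow> ('x \<Rightarrow> 'y set) \<Rightarrow> (baire \<Rightarrow> baire option) \<Rightarrow> bool"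
  where
  "realizer \<delta>X \<delta>Y D f F \<longleftrightarrow>
     (\<forall>p x. \<delta>X p = Some x \<and> x \<in> D \<longrightarrow> (\<exists>q y. F p = Some q \<and> \<delta>Y q = Some y \<and> y \<in> f x))"

definition weihrauch_le ::
  "(baire \<Rightarrow> 'x option) \<Rightarrow> (baire \<Rightarrow> 'y option) \<Rightarrow> 'x set \<Rightarrow> ('x \<Rightarrow> 'y set) \<Rightarrow>
   (baire \<Rightarrow> 'z option) \<Rightarrow> (baire \<Rightarrow> 'w option) \<Rightarrow> 'z set \<Rightarrow> ('z \<Rightarrow> 'w set) \<Rightarrow> bool"
  where
  "weihrauch_le \<delta>X \<delta>Y D f \<delta>Z \<delta>W E g \<longleftrightarrow>
     (\<exists>H K. computable_baire H \<and> computable_baire K \<and>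
        (\<forall>G. realizer \<delta>Z \<delta>W E g G \<longrightarrow>
             realizer \<delta>X \<delta>Y D f
               (\<lambda>p. case K p of None \<Rightarrow> None
                   | Some q \<Rightarrow> (case G q of None \<Rightarrow> None | Some r \<Rightarrow> H (bpair p r)))))"

definition weihrauch_equiv ::
  "(baire \<Rightarrow> 'x option) \<Rightarrow> (baire \<Rightarrow> 'y option) \<Rightarrow> 'x set \<Rightarrow> ('x \<Rightarrow> 'y set) \<Rightarrow>
   (baire \<Rightarrow> 'z option) \<Rightarrow> (baire \<Rightarrow> 'w option) \<Rightarrow> 'z set \<Rightarrow> ('z \<Rightarrow> 'w set) \<Rightarrow> bool"
  where
  "weihrauch_equiv \<delta>X \<delta>Y D f \<delta>Z \<delta>W E g \<longleftrightarrow>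
     weihrauch_le \<delta>X \<delta>Y D f \<delta>Z \<delta>W E g \<and> weihrauch_le \<delta>Z \<delta>W E g \<delta>X \<delta>Y D f"

definition delta_nat :: "baire \<Rightarrow> nat option" where
  "delta_nat p = Some (p 0)"

definition rat_code :: "nat \<Rightarrow> real" where
  "rat_code n = (case prod_decode n of (a, b) \<Rightarrow> real_of_int (int_decode a) / real (Suc b))"

definition computable_metric_space :: "(nat \<Rightarrow> 'a::metric_space) \<Rightarrow> bool" where
  "computable_metric_space \<alpha> \<longleftrightarrow>
     closure (range \<alpha>) = UNIV \<and>
     (\<exists>g. computable_nat_fun g \<and>
        (\<forall>i j k. \<exists>v. g (prod_encode (i, prod_encode (j, k))) = Some v \<and>
                    \<bar>dist (\<alpha> i) (\<alpha> j) - rat_code v\<bar> \<le> 1 / 2 ^ k))"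

text \<open>Rational open ball with code n = <centre index, rational radius code>
  (a non-positive radius gives the empty ball, which allows naming X itself).\<close>
definition ball_code :: "(nat \<Rightarrow> 'a::metric_space) \<Rightarrow> nat \<Rightarrow> 'a set" where
  "ball_code \<alpha> n = (case prod_decode n of (c, r) \<Rightarrow> ball (\<alpha> c) (rat_code r))"

definition delta_closed :: "(nat \<Rightarrow> 'a::metric_space) \<Rightarrow> baire \<Rightarrow> 'a set option" where
  "delta_closed \<alpha> p = Some (- (\<Union>k. ball_code \<alpha> (p k)))"

definition delta_closed_seq :: "(nat \<Rightarrow> 'a::metric_space) \<Rightarrow> baire \<Rightarrow> (nat \<Rightarrow> 'a set) option" where
  "delta_closed_seq \<alpha> p = Some (\<lambda>i. - (\<Union>k. ball_code \<alpha> (p (prod_encode (i, k)))))"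

definition delta_closed_nat :: "baire \<Rightarrow> nat set option" where
  "delta_closed_nat p = Some {n. Suc n \<notin> range p}"

definition CN_dom :: "nat set set" where
  "CN_dom = {A. A \<noteq> {}}"

definition CN :: "nat set \<Rightarrow> nat set" where
  "CN A = A"

definition BCT_dom :: "(nat \<Rightarrow> 'a::topological_space set) set" where
  "BCT_dom = {As. (\<forall>i. closed (As i)) \<and> (\<Union>i. As i) = UNIV}"

definition BCT :: "(nat \<Rightarrow> 'a::topological_space set) \<Rightarrow> nat set" where
  "BCT As = {n. interior (As n) \<noteq> {}}"

end

theory Submission
  imports Defs
begin


definition prc :: "nat \<Rightarrow> (nat list \<Rightarrow> nat) \<Rightarrow> bool" where
  "prc n f \<longleftrightarrow> partrec n (\<lambda>xs. Some (f xs))"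

lemma prc_ext: "prc n f \<Longrightarrow> (\<And>xs. length xs = n \<Longrightarrow> g xs = f xs) \<Longrightarrow> prc n g"
  unfolding prc_def by (rule pr_ext) auto

lemma prc_ext': "prc m f \<Longrightarrow> m = n \<Longrightarrow> (\<And>xs. length xs = n \<Longrightarrow> g xs = f xs) \<Longrightarrow> prc n g"
  using prc_ext by blast

lemma prc_zero: "prc n (\<lambda>xs. 0)"
  unfolding prc_def by (rule pr_zero)

lemma prc_proj: "i < n \<Longrightarrow> prc n (\<lambda>xs. xs ! i)"
  unfolding prc_def by (rule pr_proj)

lemma prc_succ1: "prc 1 (\<lambda>xs. Suc (xs ! 0))"
proof -
  have "prc 1 (\<lambda>xs. Suc (hd xs))" unfolding prc_def by (rule pr_succ)
  then show ?thesis by (rule prc_ext) (auto simp: length_Suc_conv numeral_2_eq_2)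
qed

lemma prc_compL:
  assumes "prc m f" "length gs = m" "\<forall>g\<in>set gs. prc n g"
  shows "prc n (\<lambda>xs. f (map (\<lambda>g. g xs) gs))"
proof -
  let ?gs = "map (\<lambda>g xs. Some (g xs)) gs"
  have "partrec n (\<lambda>xs. if (\<forall>g\<in>set ?gs. g xs \<noteq> None) then Some (f (map (\<lambda>g. the (g xs)) ?gs)) else None)"
    apply (rule pr_comp)
    using assms by (auto simp: prc_def)
  moreover have "(\<lambda>xs. if (\<forall>g\<in>set ?gs. g xs \<noteq> None) then Some (f (map (\<lambda>g. the (g xs)) ?gs)) else None)
      = (\<lambda>xs. Some (f (map (\<lambda>g. g xs) gs)))"
    by (auto simp: comp_def)
  ultimately show ?thesis unfolding prc_def by simp
qed

lemma prc_comp1: "prc 1 f \<Longrightarrow> prc n g \<Longrightarrow> prc n (\<lambda>xs. f [g xs])"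
  using prc_compL[of 1 f "[g]" n] by simp

lemma prc_comp2: "prc 2 f \<Longrightarrow> prc n g \<Longrightarrow> prc n h \<Longrightarrow> prc n (\<lambda>xs. f [g xs, h xs])"
  using prc_compL[of 2 f "[g,h]" n] by simp

lemma prc_comp3: "prc 3 f \<Longrightarrow> prc n g \<Longrightarrow> prc n h \<Longrightarrow> prc n k \<Longrightarrow> prc n (\<lambda>xs. f [g xs, h xs, k xs])"
  using prc_compL[of 3 f "[g,h,k]" n] by (simp add: numeral_3_eq_3)

lemma prc_Suc: "prc n a \<Longrightarrow> prc n (\<lambda>xs. Suc (a xs))"
  using prc_comp1[OF prc_succ1] by simp

lemma prc_const: "prc n (\<lambda>xs. c)"
  by (induction c) (auto intro: prc_zero prc_Suc)

fun natrec :: "(nat list \<Rightarrow> nat) \<Rightarrow> (nat \<Rightarrow> nat \<Rightarrow> nat list \<Rightarrow> nat) \<Rightarrow> nat \<Rightarrow> nat list \<Rightarrow> nat" where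
  "natrec g h 0 ys = g ys"
| "natrec g h (Suc k) ys = h k (natrec g h k ys) ys"

lemma prec_natrec: "prec (\<lambda>ys. Some (g ys)) (\<lambda>xs. Some (h (xs!0) (xs!1) (drop 2 xs))) k ys = Some (natrec g h k ys)"
  by (induction k) auto

lemma prc_natrec:
  assumes "prc n g" "prc m H" "m = n+2" "\<And>xs. length xs = n+2 \<Longrightarrow> H xs = h (xs!0) (xs!1) (drop 2 xs)"
  shows "prc (n+1) (\<lambda>xs. natrec g h (xs!0) (tl xs))"
proof -
  have H: "prc (n+2) (\<lambda>xs. h (xs!0) (xs!1) (drop 2 xs))"
    using assms(2) by (rule prc_ext') (use assms(3,4) in auto)
  have "partrec (n+1) (\<lambda>xs. prec (\<lambda>ys. Some (g ys)) (\<lambda>xs. Some (h (xs!0) (xs!1) (drop 2 xs))) (hd xs) (tl xs))"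
    by (rule pr_prec) (use assms(1) H in \<open>auto simp: prc_def\<close>)
  then have "prc (n+1) (\<lambda>xs. natrec g h (hd xs) (tl xs))"
    unfolding prc_def prec_natrec .
  then show ?thesis by (rule prc_ext) (auto simp: length_Suc_conv numeral_2_eq_2)
qed

lemma prc_reidx:
  assumes "prc m f" "length is = m" "\<forall>i\<in>set is. i < n"
  shows "prc n (\<lambda>xs. f (map (\<lambda>i. xs ! i) is))"
proof -
  have "prc n (\<lambda>xs. f (map (\<lambda>g. g xs) (map (\<lambda>i xs. xs ! i) is)))"
    by (rule prc_compL) (use assms in \<open>auto intro: prc_proj\<close>)
  then show ?thesis by (simp add: comp_def)
qed


lemma natrec_add: "natrec (\<lambda>ys. ys!0) (\<lambda>k r ys. Suc r) k ys = k + ys!0"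
  by (induction k) auto

lemma prc_add2: "prc 2 (\<lambda>xs. xs!0 + xs!1)"
proof -
  have "prc (1+1) (\<lambda>xs. natrec (\<lambda>ys. ys!0) (\<lambda>k r ys. Suc r) (xs!0) (tl xs))"
    by (rule prc_natrec[where H="\<lambda>xs. Suc (xs!1)"]) (auto intro!: prc_proj prc_Suc)
  then show ?thesis by (rule prc_ext') (auto simp: natrec_add length_Suc_conv numeral_2_eq_2)
qed

lemma prc_add: "prc n a \<Longrightarrow> prc n b \<Longrightarrow> prc n (\<lambda>xs. a xs + b xs)"
  using prc_comp2[OF prc_add2] by simp

lemma natrec_mult: "natrec (\<lambda>ys. 0) (\<lambda>k r ys. r + ys!0) k ys = k * ys!0"
  by (induction k) auto

lemma prc_mult2: "prc 2 (\<lambda>xs. xs!0 * xs!1)"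
proof -
  have "prc (1+1) (\<lambda>xs. natrec (\<lambda>ys. 0) (\<lambda>k r ys. r + ys!0) (xs!0) (tl xs))"
    by (rule prc_natrec[where H="\<lambda>xs. xs!1 + xs!2"]) (auto intro!: prc_proj prc_const prc_add)
  then show ?thesis by (rule prc_ext') (auto simp: natrec_mult length_Suc_conv numeral_2_eq_2)
qed

lemma prc_mult: "prc n a \<Longrightarrow> prc n b \<Longrightarrow> prc n (\<lambda>xs. a xs * b xs)"
  using prc_comp2[OF prc_mult2] by simp

lemma natrec_pred: "natrec (\<lambda>ys. 0) (\<lambda>k r ys. k) k ys = k - 1"
  by (induction k) auto

lemma prc_pred1: "prc 1 (\<lambda>xs. xs!0 - 1)"
proof -
  have "prc (0+1) (\<lambda>xs. natrec (\<lambda>ys. 0) (\<lambda>k r ys. k) (xs!0) (tl xs))"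
    by (rule prc_natrec[where H="\<lambda>xs. xs!0"]) (auto intro: prc_proj prc_const)
  then show ?thesis by (rule prc_ext') (auto simp: natrec_pred)
qed

lemma natrec_sub: "natrec (\<lambda>ys. ys!0) (\<lambda>k r ys. r - Suc 0) k ys = ys!0 - k"
  by (induction k) auto

lemma prc_sub2: "prc 2 (\<lambda>xs. xs!1 - xs!0)"
proof -
  have p: "prc 3 (\<lambda>xs. xs!1 - 1)"
    using prc_comp1[OF prc_pred1 prc_proj[of 1 3]] by simp
  have "prc (1+1) (\<lambda>xs. natrec (\<lambda>ys. ys!0) (\<lambda>k r ys. r - 1) (xs!0) (tl xs))"
    by (rule prc_natrec[OF _ p]) (auto intro: prc_proj)
  then show ?thesis by (rule prc_ext') (auto simp: natrec_sub length_Suc_conv numeral_2_eq_2)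
qed

lemma prc_sub: "prc n a \<Longrightarrow> prc n b \<Longrightarrow> prc n (\<lambda>xs. a xs - b xs)"
  using prc_comp2[OF prc_sub2, of n b a] by simp

definition prb :: "nat \<Rightarrow> (nat list \<Rightarrow> bool) \<Rightarrow> bool" where
  "prb n P \<longleftrightarrow> prc n (\<lambda>xs. if P xs then 1 else 0)"

lemma prc_if: "prb n P \<Longrightarrow> prc n a \<Longrightarrow> prc n b \<Longrightarrow> prc n (\<lambda>xs. if P xs then a xs else b xs)"
proof -
  assume "prb n P" "prc n a" "prc n b"
  then have "prc n (\<lambda>xs. a xs * (if P xs then 1 else 0) + b xs * (1 - (if P xs then 1 else 0)))"
    unfolding prb_def by (intro prc_add prc_mult prc_sub prc_const)
  then show ?thesis by (rule prc_ext) auto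
qed

lemma prb_less: "prc n a \<Longrightarrow> prc n b \<Longrightarrow> prb n (\<lambda>xs. a xs < b xs)"
proof -
  assume "prc n a" "prc n b"
  then have "prc n (\<lambda>xs. 1 - (1 - (b xs - a xs)))" by (intro prc_sub prc_const)
  then show ?thesis unfolding prb_def by (rule prc_ext) auto
qed

lemma prb_not: "prb n P \<Longrightarrow> prb n (\<lambda>xs. \<not> P xs)"
proof -
  assume "prb n P"
  then have "prc n (\<lambda>xs. 1 - (if P xs then 1 else 0))" unfolding prb_def by (intro prc_sub prc_const)
  then show ?thesis unfolding prb_def by (rule prc_ext) auto
qed

lemma prb_and: "prb n P \<Longrightarrow> prb n Q \<Longrightarrow> prb n (\<lambda>xs. P xs \<and> Q xs)"
proof -
  assume "prb n P" "prb n Q"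
  then have "prc n (\<lambda>xs. (if P xs then 1 else 0) * (if Q xs then 1 else 0))" unfolding prb_def by (intro prc_mult)
  then show ?thesis unfolding prb_def by (rule prc_ext) auto
qed

lemma prb_or: "prb n P \<Longrightarrow> prb n Q \<Longrightarrow> prb n (\<lambda>xs. P xs \<or> Q xs)"
proof -
  assume "prb n P" "prb n Q"
  then have "prb n (\<lambda>xs. \<not> (\<not> P xs \<and> \<not> Q xs))" by (intro prb_not prb_and)
  then show ?thesis by simp
qed

lemma prb_le: "prc n a \<Longrightarrow> prc n b \<Longrightarrow> prb n (\<lambda>xs. a xs \<le> b xs)"
proof -
  assume "prc n a" "prc n b"
  then have "prb n (\<lambda>xs. \<not> b xs < a xs)" by (intro prb_not prb_less)
  then show ?thesis by (simp add: not_less)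
qed

lemma prb_eq: "prc n a \<Longrightarrow> prc n b \<Longrightarrow> prb n (\<lambda>xs. a xs = b xs)"
proof -
  assume "prc n a" "prc n b"
  then have "prb n (\<lambda>xs. a xs \<le> b xs \<and> b xs \<le> a xs)" by (intro prb_and prb_le)
  then show ?thesis by (simp add: eq_iff)
qed

lemma prb_const: "prb n (\<lambda>xs. c)"
  unfolding prb_def by (cases c) (auto intro: prc_const)

lemma natrec_tri: "natrec (\<lambda>ys. 0) (\<lambda>k r ys. Suc (r + k)) k ys = triangle k"
  by (induction k) auto

lemma prc_tri1: "prc 1 (\<lambda>xs. triangle (xs!0))"
proof -
  have "prc (0+1) (\<lambda>xs. natrec (\<lambda>ys. 0) (\<lambda>k r ys. r + Suc k) (xs!0) (tl xs))"
    by (rule prc_natrec[where H="\<lambda>xs. xs!1 + Suc (xs!0)"]) (auto intro!: prc_proj prc_const prc_Suc prc_add)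
  then show ?thesis by (rule prc_ext') (auto simp: natrec_tri)
qed

lemma prc_tri: "prc n a \<Longrightarrow> prc n (\<lambda>xs. triangle (a xs))"
  using prc_comp1[OF prc_tri1] by simp

definition bmin :: "(nat list \<Rightarrow> bool) \<Rightarrow> nat \<Rightarrow> nat list \<Rightarrow> nat" where
  "bmin P k ys = natrec (\<lambda>ys. 0) (\<lambda>k r ys. if r \<noteq> k then r else if P (k#ys) then k else Suc k) k ys"

lemma bmin_props: "bmin P k ys \<le> k \<and> (bmin P k ys < k \<longrightarrow> P (bmin P k ys # ys)) \<and> (\<forall>t<bmin P k ys. \<not> P (t # ys))"
  unfolding bmin_def
  by (induction k) (auto simp: less_Suc_eq)

lemma bmin_lt_iff: "bmin P k ys < k \<longleftrightarrow> (\<exists>t<k. P (t # ys))"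
  using bmin_props[of P k ys] by (metis order.strict_trans2 not_less)

lemma map_nth_drop: "n = length xs \<Longrightarrow> map (\<lambda>i. xs ! i) [a..<n] = drop a xs"
  by (rule nth_equalityI) auto

lemma prc_bmin:
  assumes "prb (Suc n) P"
  shows "prc (Suc n) (\<lambda>xs. bmin P (xs!0) (tl xs))"
proof -
  have P2: "prb (n+2) (\<lambda>xs. P (xs!0 # drop 2 xs))"
  proof -
    have "prc (n+2) (\<lambda>xs. (\<lambda>xs. if P xs then 1 else 0) (map (\<lambda>i. xs ! i) (0 # [2..<n+2])))"
      by (rule prc_reidx[where m="Suc n"]) (use assms in \<open>auto simp: prb_def simp del: upt.simps\<close>)
    then show ?thesis unfolding prb_def
      by (rule prc_ext) (simp add: map_nth_drop del: upt.simps)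
  qed
  have H: "prc (n+2) (\<lambda>xs. if \<not> xs!1 = xs!0 then xs!1 else if P (xs!0 # drop 2 xs) then xs!0 else Suc (xs!0))"
    by (intro prc_if prb_not prb_eq prc_proj P2 prc_Suc) auto
  have "prc (n+1) (\<lambda>xs. natrec (\<lambda>ys. 0) (\<lambda>k r ys. if r \<noteq> k then r else if P (k#ys) then k else Suc k) (xs!0) (tl xs))"
    by (rule prc_natrec[OF prc_const H]) auto
  then show ?thesis unfolding bmin_def by simp
qed

lemma prc_bmin_gen:
  assumes "prb (Suc n) P" "prc n k"
  shows "prc n (\<lambda>xs. bmin P (k xs) xs)"
proof -
  have "prc n (\<lambda>xs. (\<lambda>xs. bmin P (xs!0) (tl xs)) (map (\<lambda>g. g xs) (k # map (\<lambda>i xs. xs!i) [0..<n])))"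
    by (rule prc_compL[OF prc_bmin[OF assms(1)]]) (use assms(2) in \<open>auto intro: prc_proj\<close>)
  then show ?thesis by (rule prc_ext) (simp add: comp_def map_nth_drop[where a=0, simplified])
qed

lemma prb_bex:
  assumes "prb (Suc n) P" "prc n k"
  shows "prb n (\<lambda>xs. \<exists>t<k xs. P (t # xs))"
proof -
  have "prb n (\<lambda>xs. bmin P (k xs) xs < k xs)"
    by (intro prb_less prc_bmin_gen assms)
  then show ?thesis by (simp add: bmin_lt_iff)
qed



lemma partrec_guard:
  assumes "prb n P" "prc n v"
  shows "partrec n (\<lambda>xs. if P xs then Some (v xs) else None)"
proof -
  have Pt: "prb (n+1) (\<lambda>xs. P (tl xs))"
  proof -
    have "prc (n+1) (\<lambda>xs. (\<lambda>xs. if P xs then 1 else 0) (map (\<lambda>i. xs ! i) [1..<n+1]))"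
      by (rule prc_reidx[where m=n]) (use assms in \<open>auto simp: prb_def simp del: upt.simps\<close>)
    then show ?thesis unfolding prb_def
      by (rule prc_ext) (simp add: map_nth_drop drop_Suc del: upt.simps)
  qed
  have f: "prc (n+1) (\<lambda>xs. if P (tl xs) then 0 else 1)"
    by (intro prc_if Pt prc_const)
  have m: "partrec n (mu (\<lambda>xs. Some (if P (tl xs) then 0 else 1)))"
    by (rule pr_mu) (use f in \<open>simp add: prc_def\<close>)
  have add: "prc 2 (\<lambda>xs. xs!0 + xs!1)" by (rule prc_add2)
  let ?gs = "[mu (\<lambda>xs. Some (if P (tl xs) then 0 else 1)), \<lambda>xs. Some (v xs)]"
  have "partrec n (\<lambda>xs. if (\<forall>g\<in>set ?gs. g xs \<noteq> None) then Some ((\<lambda>xs. xs!0 + xs!1) (map (\<lambda>g. the (g xs)) ?gs)) else None)"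
    apply (rule pr_comp[where m=2])
    using add m assms by (simp_all add: prc_def)
  moreover have "(\<lambda>xs. if (\<forall>g\<in>set ?gs. g xs \<noteq> None) then Some ((\<lambda>xs. xs!0 + xs!1) (map (\<lambda>g. the (g xs)) ?gs)) else None)
     = (\<lambda>xs. if P xs then Some (v xs) else None)"
    by (rule ext) (auto simp: mu_def)
  ultimately show ?thesis by simp
qed

section \<open>Decoding pairs\<close>

definition sdec :: "nat \<Rightarrow> nat" where
  "sdec m = bmin (\<lambda>ys. ys!1 < triangle (Suc (ys!0))) (Suc m) [m]"

lemma triangle_ge: "m < triangle (Suc m)"
  by (induction m) auto

lemma triangle_mono: "a \<le> b \<Longrightarrow> triangle a \<le> triangle b"
  by (induction b) (auto simp: le_Suc_eq)

lemma sdec_props: "triangle (sdec m) \<le> m \<and> m < triangle (sdec m) + Suc (sdec m)"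
proof -
  let ?P = "\<lambda>ys::nat list. ys!1 < triangle (Suc (ys!0))"
  let ?s = "sdec m"
  have b: "bmin ?P (Suc m) [m] \<le> Suc m \<and> (bmin ?P (Suc m) [m] < Suc m \<longrightarrow> ?P (bmin ?P (Suc m) [m] # [m])) \<and> (\<forall>t<bmin ?P (Suc m) [m]. \<not> ?P (t # [m]))"
    by (rule bmin_props)
  have ex: "\<exists>t<Suc m. ?P (t # [m])" by (rule exI[of _ m]) simp
  have lt: "?s < Suc m" unfolding sdec_def using bmin_lt_iff[of ?P "Suc m" "[m]"] ex by blast
  then have "m < triangle (Suc ?s)" using b unfolding sdec_def by simp
  moreover have "triangle ?s \<le> m"
  proof (cases ?s)
    case 0 then show ?thesis by simp
  next
    case (Suc t)
    then have "t < ?s" by simp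
    then have "\<not> m < triangle (Suc t)" using b unfolding sdec_def by simp
    then show ?thesis using Suc by simp
  qed
  ultimately show ?thesis by simp
qed

lemma prod_decode_sdec: "prod_decode m = (m - triangle (sdec m), sdec m - (m - triangle (sdec m)))"
proof -
  have p: "triangle (sdec m) \<le> m" "m < triangle (sdec m) + Suc (sdec m)" using sdec_props by auto
  have "prod_encode (m - triangle (sdec m), sdec m - (m - triangle (sdec m))) = m"
    using p by (simp add: prod_encode_def)
  then show ?thesis by (metis prod_encode_inverse)
qed

lemma prc_sdec1: "prc 1 (\<lambda>xs. sdec (xs!0))"
proof -
  have "prc 1 (\<lambda>xs. bmin (\<lambda>ys. ys!1 < triangle (Suc (ys!0))) (Suc (xs!0)) xs)"
    by (intro prc_bmin_gen prb_less prc_tri prc_Suc prc_proj) auto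
  then show ?thesis unfolding sdec_def by (rule prc_ext) (auto simp: length_Suc_conv)
qed

lemma prc_sdec: "prc n a \<Longrightarrow> prc n (\<lambda>xs. sdec (a xs))"
  using prc_comp1[OF prc_sdec1] by simp

lemma prc_pfst: "prc n a \<Longrightarrow> prc n (\<lambda>xs. fst (prod_decode (a xs)))"
proof -
  assume a: "prc n a"
  have "prc n (\<lambda>xs. a xs - triangle (sdec (a xs)))" by (intro prc_sub prc_tri prc_sdec a)
  then show ?thesis by (rule prc_ext) (subst prod_decode_sdec, simp)
qed

lemma prc_psnd: "prc n a \<Longrightarrow> prc n (\<lambda>xs. snd (prod_decode (a xs)))"
proof -
  assume a: "prc n a"
  have "prc n (\<lambda>xs. sdec (a xs) - (a xs - triangle (sdec (a xs))))" by (intro prc_sub prc_tri prc_sdec a)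
  then show ?thesis by (rule prc_ext) (subst prod_decode_sdec, simp)
qed

lemma prc_penc: "prc n a \<Longrightarrow> prc n b \<Longrightarrow> prc n (\<lambda>xs. prod_encode (a xs, b xs))"
proof -
  assume "prc n a" "prc n b"
  then have "prc n (\<lambda>xs. triangle (a xs + b xs) + a xs)" by (intro prc_add prc_tri)
  then show ?thesis by (rule prc_ext) (simp add: prod_encode_def)
qed

section \<open>Lists\<close>

definition itl :: "nat \<Rightarrow> nat \<Rightarrow> nat" where
  "itl j c = ((\<lambda>c. snd (prod_decode (c - 1))) ^^ j) c"

lemma natrec_itl: "natrec (\<lambda>ys. ys!0) (\<lambda>k r ys. snd (prod_decode (r - Suc 0))) j ys = itl j (ys!0)"
  by (induction j) (auto simp: itl_def)

lemma prc_itl2: "prc 2 (\<lambda>xs. itl (xs!0) (xs!1))"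
proof -
  have "prc (1+1) (\<lambda>xs. natrec (\<lambda>ys. ys!0) (\<lambda>k r ys. snd (prod_decode (r - Suc 0))) (xs!0) (tl xs))"
    by (rule prc_natrec[where H="\<lambda>xs. snd (prod_decode (xs!1 - Suc 0))"]) (auto intro!: prc_proj prc_psnd prc_sub prc_const)
  then show ?thesis by (rule prc_ext') (auto simp: natrec_itl length_Suc_conv numeral_2_eq_2)
qed

lemma prc_itl: "prc n a \<Longrightarrow> prc n b \<Longrightarrow> prc n (\<lambda>xs. itl (a xs) (b xs))"
  using prc_comp2[OF prc_itl2] by simp

definition lnth :: "nat \<Rightarrow> nat \<Rightarrow> nat" where
  "lnth j c = fst (prod_decode (itl j c - 1))"

lemma prc_lnth: "prc n a \<Longrightarrow> prc n b \<Longrightarrow> prc n (\<lambda>xs. lnth (a xs) (b xs))"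
  unfolding lnth_def by (intro prc_pfst prc_sub prc_itl prc_const)

lemma pd0: "prod_decode 0 = (0,0)"
proof -
  have "prod_encode (0,0) = 0" by (simp add: prod_encode_def)
  then show ?thesis by (metis prod_encode_inverse)
qed

lemma itl_list_encode: "itl j (list_encode xs) = list_encode (drop j xs)"
proof (induction j)
  case 0 then show ?case by (simp add: itl_def)
next
  case (Suc j)
  have "itl (Suc j) (list_encode xs) = snd (prod_decode (itl j (list_encode xs) - 1))"
    by (simp add: itl_def)
  also have "\<dots> = list_encode (drop (Suc j) xs)"
  proof (cases "drop j xs")
    case Nil
    then have "drop (Suc j) xs = []" by (metis drop_Suc tl_drop list.sel(2))
    then show ?thesis using Suc Nil by (simp add: pd0)
  next
    case (Cons y ys)
    then have "drop (Suc j) xs = ys" by (metis drop_Suc tl_drop list.sel(3))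
    then show ?thesis using Suc Cons by simp
  qed
  finally show ?case .
qed

lemma list_encode_0_iff: "list_encode xs = 0 \<longleftrightarrow> xs = []"
  by (cases xs) auto

lemma list_encode_pos: "0 < list_encode xs \<longleftrightarrow> xs \<noteq> []"
  by (cases xs) auto

lemma lnth_list_encode: "j < length xs \<Longrightarrow> lnth j (list_encode xs) = xs ! j"
  unfolding lnth_def itl_list_encode by (simp add: Cons_nth_drop_Suc[symmetric])

lemma itl_prefix: "0 < itl j (prefix_code p k) \<longleftrightarrow> j < k"
  unfolding prefix_code_def itl_list_encode list_encode_pos by auto

lemma lnth_prefix: "j < k \<Longrightarrow> lnth j (prefix_code p k) = p j"
  unfolding prefix_code_def by (simp add: lnth_list_encode)

section \<open>The generic computability lemma\<close>

lemma computable_baire_I: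
  assumes F: "prc 2 F" and L: "prc 1 (\<lambda>xs. L (xs!0))"
    and Q: "\<And>p t k. L t < k \<Longrightarrow> F [t, prefix_code p k] = Q p t"
  shows "computable_baire (\<lambda>p. Some (Q p))"
proof -
  define e where "e y = (if itl (L (fst (prod_decode y))) (snd (prod_decode y)) \<noteq> 0
      then Some (F [fst (prod_decode y), snd (prod_decode y)]) else None)" for y
  have "partrec 1 (\<lambda>xs. if itl (L (fst (prod_decode (xs!0)))) (snd (prod_decode (xs!0))) \<noteq> 0
      then Some (F [fst (prod_decode (xs!0)), snd (prod_decode (xs!0))]) else None)"
  proof (rule partrec_guard)
    have l: "prc 1 (\<lambda>xs. L (fst (prod_decode (xs!0))))"
      using prc_comp1[OF L prc_pfst[OF prc_proj[of 0 1]]] by simp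
    show "prb 1 (\<lambda>xs. itl (L (fst (prod_decode (xs!0)))) (snd (prod_decode (xs!0))) \<noteq> 0)"
      by (intro prb_not prb_eq prc_itl l prc_psnd prc_proj prc_const) auto
    show "prc 1 (\<lambda>xs. F [fst (prod_decode (xs!0)), snd (prod_decode (xs!0))])"
      by (intro prc_comp2[OF F] prc_pfst prc_psnd prc_proj) auto
  qed
  then have ce: "computable_nat_fun e"
    unfolding computable_nat_fun_def e_def
    by (rule pr_ext) (auto simp: length_Suc_conv)
  show ?thesis unfolding computable_baire_def
  proof (rule exI[of _ e], intro conjI ce allI impI)
    fix p q i
    assume "Some (Q p) = Some q"
    show "\<exists>k. e (prod_encode (i, prefix_code p k)) \<noteq> None"
      by (rule exI[of _ "Suc (L i)"]) (simp add: e_def itl_prefix)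
  next
    fix p q i k v
    assume "Some (Q p) = Some q" "e (prod_encode (i, prefix_code p k)) = Some v"
    then show "v = q i"
      by (auto simp: e_def itl_prefix Q split: if_splits)
  qed
qed



lemma natrec_mod2: "natrec (\<lambda>ys. 0) (\<lambda>k r ys. Suc 0 - r) k ys = k mod 2"
  by (induction k) (auto simp: mod_Suc)

lemma prc_mod2_1: "prc 1 (\<lambda>xs. xs!0 mod 2)"
proof -
  have "prc (0+1) (\<lambda>xs. natrec (\<lambda>ys. 0) (\<lambda>k r ys. Suc 0 - r) (xs!0) (tl xs))"
    by (rule prc_natrec[where H="\<lambda>xs. Suc 0 - xs!1"]) (auto intro!: prc_proj prc_const prc_sub)
  then show ?thesis by (rule prc_ext') (auto simp: natrec_mod2)
qed

lemma prc_mod2: "prc n a \<Longrightarrow> prc n (\<lambda>xs. a xs mod 2)"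
  using prc_comp1[OF prc_mod2_1] by simp

lemma natrec_div2: "natrec (\<lambda>ys. 0) (\<lambda>k r ys. if k mod 2 = 0 then r else Suc r) k ys = k div 2"
  by (induction k) (auto, presburger)

lemma prc_div2_1: "prc 1 (\<lambda>xs. xs!0 div 2)"
proof -
  have "prc (0+1) (\<lambda>xs. natrec (\<lambda>ys. 0) (\<lambda>k r ys. if k mod 2 = 0 then r else Suc r) (xs!0) (tl xs))"
    by (rule prc_natrec[where H="\<lambda>xs. if xs!0 mod 2 = 0 then xs!1 else Suc (xs!1)"])
      (auto intro!: prc_proj prc_const prc_if prb_eq prc_mod2 prc_Suc)
  then show ?thesis by (rule prc_ext') (auto simp: natrec_div2)
qed

lemma prc_div2: "prc n a \<Longrightarrow> prc n (\<lambda>xs. a xs div 2)"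
  using prc_comp1[OF prc_div2_1] by simp

lemma natrec_pow2: "natrec (\<lambda>ys. Suc 0) (\<lambda>k r ys. r + r) k ys = 2 ^ k"
  by (induction k) auto

lemma prc_pow2_1: "prc 1 (\<lambda>xs. 2 ^ (xs!0))"
proof -
  have "prc (0+1) (\<lambda>xs. natrec (\<lambda>ys. Suc 0) (\<lambda>k r ys. r + r) (xs!0) (tl xs))"
    by (rule prc_natrec[where H="\<lambda>xs. xs!1 + xs!1"]) (auto intro!: prc_proj prc_const prc_add)
  then show ?thesis by (rule prc_ext') (auto simp: natrec_pow2)
qed

lemma prc_pow2: "prc n a \<Longrightarrow> prc n (\<lambda>xs. 2 ^ (a xs))"
  using prc_comp1[OF prc_pow2_1] by simp

section \<open>Integers and rationals\<close>

definition ipos :: "nat \<Rightarrow> nat" where "ipos a = (if a mod 2 = 0 then a div 2 else 0)"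
definition ineg :: "nat \<Rightarrow> nat" where "ineg a = (if a mod 2 = 0 then 0 else Suc (a div 2))"

lemma int_decode_pn: "int_decode a = int (ipos a) - int (ineg a)"
  by (auto simp: int_decode_def sum_decode_def ipos_def ineg_def)

lemma prc_ipos: "prc n a \<Longrightarrow> prc n (\<lambda>xs. ipos (a xs))"
  unfolding ipos_def by (intro prc_if prb_eq prc_mod2 prc_div2 prc_const)

lemma prc_ineg: "prc n a \<Longrightarrow> prc n (\<lambda>xs. ineg (a xs))"
  unfolding ineg_def by (intro prc_if prb_eq prc_mod2 prc_div2 prc_const prc_Suc)

text \<open>ltc v m w  iff  rat_code v + 1/2^m < rat_code w\<close>
definition ltc :: "nat \<Rightarrow> nat \<Rightarrow> nat \<Rightarrow> bool" where
  "ltc v m w \<longleftrightarrow>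
     ipos (fst (prod_decode v)) * Suc (snd (prod_decode w)) * 2 ^ m
     + Suc (snd (prod_decode v)) * Suc (snd (prod_decode w))
     + ineg (fst (prod_decode w)) * Suc (snd (prod_decode v)) * 2 ^ m
   < ipos (fst (prod_decode w)) * Suc (snd (prod_decode v)) * 2 ^ m
     + ineg (fst (prod_decode v)) * Suc (snd (prod_decode w)) * 2 ^ m"

lemma prb_ltc: "prc n v \<Longrightarrow> prc n m \<Longrightarrow> prc n w \<Longrightarrow> prb n (\<lambda>xs. ltc (v xs) (m xs) (w xs))"
  unfolding ltc_def
  by (intro prb_less prc_add prc_mult prc_ipos prc_ineg prc_pfst prc_psnd prc_Suc prc_pow2)

lemma rat_code_pn: "rat_code v = (real (ipos (fst (prod_decode v))) - real (ineg (fst (prod_decode v)))) / real (Suc (snd (prod_decode v)))"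
  by (simp add: rat_code_def int_decode_pn split: prod.splits)

lemma frac_less_iff:
  fixes x y B1 B2 P :: real
  assumes "B1 > 0" "B2 > 0" "P > 0"
  shows "x / B1 + 1 / P < y / B2 \<longleftrightarrow> x * B2 * P + B1 * B2 < y * B1 * P"
  using assms by (simp add: field_simps)

lemma ltc_iff: "ltc v m w \<longleftrightarrow> rat_code v + 1 / 2 ^ m < rat_code w"
proof -
  define p1 where "p1 = real (ipos (fst (prod_decode v)))"
  define n1 where "n1 = real (ineg (fst (prod_decode v)))"
  define p2 where "p2 = real (ipos (fst (prod_decode w)))"
  define n2 where "n2 = real (ineg (fst (prod_decode w)))"
  define B1 where "B1 = real (Suc (snd (prod_decode v)))"
  define B2 where "B2 = real (Suc (snd (prod_decode w)))"
  define P where "P = (2::real) ^ m"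
  have pos: "B1 > 0" "B2 > 0" "P > 0" unfolding B1_def B2_def P_def by auto
  have "ltc v m w \<longleftrightarrow> p1 * B2 * P + B1 * B2 + n2 * B1 * P < p2 * B1 * P + n1 * B2 * P"
    unfolding ltc_def p1_def n1_def p2_def n2_def B1_def B2_def P_def
    by (simp only: of_nat_less_iff[symmetric, where 'a=real] of_nat_add of_nat_mult of_nat_power) simp
  also have "\<dots> \<longleftrightarrow> (p1 - n1) * B2 * P + B1 * B2 < (p2 - n2) * B1 * P"
    by (simp add: algebra_simps)
  also have "\<dots> \<longleftrightarrow> (p1 - n1) / B1 + 1 / P < (p2 - n2) / B2"
    using frac_less_iff[OF pos] by simp
  also have "\<dots> \<longleftrightarrow> rat_code v + 1 / 2 ^ m < rat_code w"
    unfolding rat_code_pn[of v] rat_code_pn[of w] p1_def n1_def p2_def n2_def B1_def B2_def P_def by simp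
  finally show ?thesis .
qed

lemma rat_code_pos_iff: "0 < rat_code r \<longleftrightarrow> 0 < ipos (fst (prod_decode r))"
proof -
  have "ipos a = 0 \<or> ineg a = 0" for a by (simp add: ipos_def ineg_def)
  moreover have "0 < ipos a \<or> 0 < ineg a \<or> (ipos a = 0 \<and> ineg a = 0)" for a by auto
  ultimately show ?thesis unfolding rat_code_pn
    by (auto simp: divide_pos_pos zero_less_divide_iff) (metis of_nat_0 of_nat_less_iff diff_gt_0_iff_gt not_less_zero le0 less_le_not_le)+
qed



lemma rat_code_0: "rat_code 0 = 0"
  by (simp add: rat_code_def pd0 int_decode_def sum_decode_def)

lemma ball_code_0: "ball_code \<alpha> 0 = {}"
  by (simp add: ball_code_def pd0 rat_code_0)

lemma rat_code_nat: "rat_code (prod_encode (2 * k, 0)) = real k"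
  by (simp add: rat_code_def int_decode_def sum_decode_def)

lemma ball_code_big: "ball_code \<alpha> (prod_encode (0, prod_encode (2 * k, 0))) = ball (\<alpha> 0) (real k)"
  by (simp add: ball_code_def rat_code_nat)

definition Kcn :: "baire \<Rightarrow> nat \<Rightarrow> nat" where
  "Kcn p y = (if \<exists>t<snd (prod_decode y). p t = Suc (fst (prod_decode y))
      then prod_encode (0, prod_encode (2 * snd (prod_decode y), 0)) else 0)"

lemma computable_Kcn: "computable_baire (\<lambda>p. Some (Kcn p))"
proof (rule computable_baire_I[where L="\<lambda>y. snd (prod_decode y)"
      and F="\<lambda>xs. if \<exists>t<snd (prod_decode (xs!0)). lnth t (xs!1) = Suc (fst (prod_decode (xs!0)))
      then prod_encode (0, prod_encode (2 * snd (prod_decode (xs!0)), 0)) else 0"])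
  have b: "prb 2 (\<lambda>xs. \<exists>t<snd (prod_decode (xs!0)). (\<lambda>ys. lnth (ys!0) (ys!2) = Suc (fst (prod_decode (ys!1)))) (t # xs))"
    by (rule prb_bex) (intro prb_eq prc_lnth prc_proj prc_Suc prc_pfst prc_psnd; simp)+
  show "prc 2 (\<lambda>xs. if \<exists>t<snd (prod_decode (xs!0)). lnth t (xs!1) = Suc (fst (prod_decode (xs!0)))
      then prod_encode (0, prod_encode (2 * snd (prod_decode (xs!0)), 0)) else 0)"
    apply (rule prc_if)
    using b apply simp
    by (intro prc_penc prc_mult prc_const prc_psnd prc_proj; simp)+
  show "prc 1 (\<lambda>xs. snd (prod_decode (xs!0)))" by (intro prc_psnd prc_proj) simp
  fix p t k
  assume "snd (prod_decode t) < k"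
  then show "(if \<exists>ta<snd (prod_decode ([t, prefix_code p k] ! 0)). lnth ta ([t, prefix_code p k] ! 1) = Suc (fst (prod_decode ([t, prefix_code p k] ! 0)))
      then prod_encode (0, prod_encode (2 * snd (prod_decode ([t, prefix_code p k] ! 0)), 0)) else 0) = Kcn p t"
    unfolding Kcn_def by (auto simp: lnth_prefix)
qed

lemma computable_H1: "computable_baire (\<lambda>s. Some (\<lambda>i. s 1))"
  by (rule computable_baire_I[where L="\<lambda>y. 1" and F="\<lambda>xs. lnth 1 (xs!1)"])
     (auto intro!: prc_lnth prc_proj prc_const simp: lnth_prefix)

lemma computable_H2: "computable_baire (\<lambda>s. Some (\<lambda>i. fst (prod_decode (s 1))))"
  by (rule computable_baire_I[where L="\<lambda>y. 1" and F="\<lambda>xs. fst (prod_decode (lnth 1 (xs!1)))"])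
     (auto intro!: prc_pfst prc_lnth prc_proj prc_const simp: lnth_prefix)

lemma bpair_1: "bpair p r 1 = r 0" "bpair p r (Suc 0) = r 0"
  by (simp_all add: bpair_def)

lemma Kcn_sets:
  "- (\<Union>k. ball_code \<alpha> (Kcn p (prod_encode (i, k)))) = (if Suc i \<in> range p then {} else UNIV)"
proof (cases "Suc i \<in> range p")
  case True
  then obtain t where t: "p t = Suc i" by auto
  have "z \<in> (\<Union>k. ball_code \<alpha> (Kcn p (prod_encode (i, k))))" for z
  proof -
    obtain n :: nat where n: "real n > dist z (\<alpha> 0)"
      using reals_Archimedean2 by blast
    define k where "k = n + Suc t"
    have k: "real k > dist z (\<alpha> 0)" "k > t" using n unfolding k_def by auto
    have "Kcn p (prod_encode (i, k)) = prod_encode (0, prod_encode (2 * k, 0))"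
      unfolding Kcn_def using t k by auto
    then have "z \<in> ball_code \<alpha> (Kcn p (prod_encode (i, k)))"
      using k by (simp add: ball_code_big dist_commute)
    then show ?thesis by blast
  qed
  then show ?thesis using True by auto
next
  case False
  then have "Kcn p (prod_encode (i, k)) = 0" for k
    unfolding Kcn_def by (auto simp: image_iff) metis
  then show ?thesis using False by (simp add: ball_code_0)
qed

lemma CN_le_BCT:
  fixes \<alpha> :: "nat \<Rightarrow> 'a::metric_space"
  shows "weihrauch_le delta_closed_nat delta_nat CN_dom CN (delta_closed_seq \<alpha>) delta_nat BCT_dom BCT"
  unfolding weihrauch_le_def
proof (intro exI conjI allI impI)
  show "computable_baire (\<lambda>s. Some (\<lambda>i. s 1))" by (rule computable_H1)
  show "computable_baire (\<lambda>p. Some (Kcn p))" by (rule computable_Kcn)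
  fix G
  assume G: "realizer (delta_closed_seq \<alpha>) delta_nat BCT_dom BCT G"
  show "realizer delta_closed_nat delta_nat CN_dom CN
          (\<lambda>p. case Some (Kcn p) of None \<Rightarrow> None
               | Some q \<Rightarrow> (case G q of None \<Rightarrow> None | Some r \<Rightarrow> Some (\<lambda>i. bpair p r 1)))"
    unfolding realizer_def
  proof (intro allI impI, elim conjE)
    fix p A
    assume A: "delta_closed_nat p = Some A" "A \<in> CN_dom"
    then have A': "A = {n. Suc n \<notin> range p}" "A \<noteq> {}" by (auto simp: delta_closed_nat_def CN_dom_def)
    define As :: "nat \<Rightarrow> 'a set" where "As = (\<lambda>i. if Suc i \<in> range p then {} else UNIV)"
    have dq: "delta_closed_seq \<alpha> (Kcn p) = Some As"
      unfolding delta_closed_seq_def As_def Kcn_sets by simp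
    have "As \<in> BCT_dom"
      unfolding BCT_dom_def As_def using A' by auto
    then obtain r y where r: "G (Kcn p) = Some r" "delta_nat r = Some y" "y \<in> BCT As"
      using G dq unfolding realizer_def by blast
    then have "r 0 \<in> A"
      using A' by (auto simp: delta_nat_def BCT_def As_def split: if_splits)
    then show "\<exists>q y. (case Some (Kcn p) of None \<Rightarrow> None
               | Some q \<Rightarrow> (case G q of None \<Rightarrow> None | Some r \<Rightarrow> Some (\<lambda>i. bpair p r 1))) = Some q \<and>
             delta_nat q = Some y \<and> y \<in> CN A"
      using r by (auto simp: bpair_1 delta_nat_def CN_def)
  qed
qed



definition xn where "xn x = fst (prod_decode x)"
definition xc where "xc x = fst (prod_decode (snd (prod_decode x)))"
definition xr where "xr x = snd (prod_decode (snd (prod_decode x)))"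
definition wj where "wj w = fst (prod_decode w)"
definition wk where "wk w = fst (prod_decode (snd (prod_decode w)))"
definition wm1 where "wm1 w = fst (prod_decode (snd (prod_decode (snd (prod_decode w)))))"
definition wm2 where "wm2 w = snd (prod_decode (snd (prod_decode (snd (prod_decode w)))))"

lemmas sel_defs = xn_def xc_def xr_def wj_def wk_def wm1_def wm2_def

lemma prc_sels:
  "prc n a \<Longrightarrow> prc n (\<lambda>xs. xn (a xs))"
  "prc n a \<Longrightarrow> prc n (\<lambda>xs. xc (a xs))"
  "prc n a \<Longrightarrow> prc n (\<lambda>xs. xr (a xs))"
  "prc n a \<Longrightarrow> prc n (\<lambda>xs. wj (a xs))"
  "prc n a \<Longrightarrow> prc n (\<lambda>xs. wk (a xs))"
  "prc n a \<Longrightarrow> prc n (\<lambda>xs. wm1 (a xs))"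
  "prc n a \<Longrightarrow> prc n (\<lambda>xs. wm2 (a xs))"
  unfolding sel_defs by (intro prc_pfst prc_psnd; assumption)+

lemma sel_x: "xn (prod_encode (n, prod_encode (c, r))) = n" "xc (prod_encode (n, prod_encode (c, r))) = c"
  "xr (prod_encode (n, prod_encode (c, r))) = r"
  by (simp_all add: sel_defs)

lemma sel_w: "wj (prod_encode (j, prod_encode (k, prod_encode (m1, m2)))) = j"
  "wk (prod_encode (j, prod_encode (k, prod_encode (m1, m2)))) = k"
  "wm1 (prod_encode (j, prod_encode (k, prod_encode (m1, m2)))) = m1"
  "wm2 (prod_encode (j, prod_encode (k, prod_encode (m1, m2)))) = m2"
  by (simp_all add: sel_defs)

definition Kb :: "(nat \<Rightarrow> nat) \<Rightarrow> nat \<Rightarrow> nat \<Rightarrow> nat \<Rightarrow> nat" where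
  "Kb gt x w v = (if \<not> 0 < ipos (fst (prod_decode (xr x))) \<or>
      (ltc (gt (prod_encode (wk w, prod_encode (xc x, wm1 w)))) (wm1 w) (xr x) \<and>
       ltc (gt (prod_encode (wk w, prod_encode (fst (prod_decode v), wm2 w)))) (wm2 w) (snd (prod_decode v)))
    then Suc x else 0)"

lemma prc_Kb:
  assumes gt: "prc 1 (\<lambda>xs. gt (xs!0))" and "prc n a" "prc n b" "prc n c"
  shows "prc n (\<lambda>xs. Kb gt (a xs) (b xs) (c xs))"
proof -
  have g: "prc n h \<Longrightarrow> prc n (\<lambda>xs. gt (h xs))" for h
    using prc_comp1[OF gt] by simp
  show ?thesis unfolding Kb_def
    by (intro prc_if prb_or prb_not prb_and prb_less prb_ltc g prc_penc prc_ipos prc_pfst prc_psnd prc_sels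
        prc_const prc_Suc assms)
qed

definition idx :: "nat \<Rightarrow> nat" where
  "idx t = prod_encode (xn (fst (prod_decode t)), wj (snd (prod_decode t)))"

definition Kbct :: "(nat \<Rightarrow> nat) \<Rightarrow> baire \<Rightarrow> nat \<Rightarrow> nat" where
  "Kbct gt p t = Kb gt (fst (prod_decode t)) (snd (prod_decode t)) (p (idx t))"

lemma computable_Kbct:
  assumes gt: "prc 1 (\<lambda>xs. gt (xs!0))"
  shows "computable_baire (\<lambda>p. Some (Kbct gt p))"
proof (rule computable_baire_I[where L=idx
      and F="\<lambda>xs. Kb gt (fst (prod_decode (xs!0))) (snd (prod_decode (xs!0))) (lnth (idx (xs!0)) (xs!1))"])
  show "prc 2 (\<lambda>xs. Kb gt (fst (prod_decode (xs!0))) (snd (prod_decode (xs!0))) (lnth (idx (xs!0)) (xs!1)))"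
    unfolding idx_def by (intro prc_Kb gt prc_pfst prc_psnd prc_lnth prc_penc prc_sels prc_proj; simp)
  show "prc 1 (\<lambda>xs. idx (xs!0))"
    unfolding idx_def by (intro prc_penc prc_sels prc_pfst prc_psnd prc_proj; simp)
  fix p t k
  assume "idx t < k"
  then show "Kb gt (fst (prod_decode ([t, prefix_code p k] ! 0))) (snd (prod_decode ([t, prefix_code p k] ! 0)))
      (lnth (idx ([t, prefix_code p k] ! 0)) ([t, prefix_code p k] ! 1)) = Kbct gt p t"
    by (simp add: Kbct_def lnth_prefix)
qed



lemma pow2_small: "0 < (e::real) \<Longrightarrow> \<exists>m::nat. 2 / 2 ^ m < e"
proof -
  assume e: "0 < e"
  obtain n :: nat where n: "real n > 2 / e" using reals_Archimedean2 by blast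
  have "real n < 2 ^ n" using less_exp[of n] by (metis of_nat_less_iff of_nat_numeral of_nat_power)
  then have "2 / e < 2 ^ n" using n by linarith
  then have "2 / 2 ^ n < e" using e by (simp add: field_simps)
  then show ?thesis by blast
qed

lemma rat_code_inv: "rat_code (prod_encode (2, N)) = 1 / real (Suc N)"
  by (simp add: rat_code_def int_decode_def sum_decode_def)

context
  fixes \<alpha> :: "nat \<Rightarrow> 'a::complete_space" and gt :: "nat \<Rightarrow> nat"
  assumes dense: "closure (range \<alpha>) = UNIV"
    and gapx: "\<And>i j k. \<bar>dist (\<alpha> i) (\<alpha> j) - rat_code (gt (prod_encode (i, prod_encode (j, k))))\<bar> \<le> 1 / 2 ^ k"
begin

lemma ltc_sound: "ltc (gt (prod_encode (i, prod_encode (j, m)))) m r \<Longrightarrow> dist (\<alpha> i) (\<alpha> j) < rat_code r"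
  using gapx[of i j m] by (auto simp: ltc_iff)

lemma ltc_complete: "dist (\<alpha> i) (\<alpha> j) < rat_code r \<Longrightarrow> \<exists>m. ltc (gt (prod_encode (i, prod_encode (j, m)))) m r"
proof -
  assume d: "dist (\<alpha> i) (\<alpha> j) < rat_code r"
  obtain m :: nat where m: "2 / 2 ^ m < rat_code r - dist (\<alpha> i) (\<alpha> j)"
    using pow2_small d by (metis diff_gt_0_iff_gt)
  have "rat_code (gt (prod_encode (i, prod_encode (j, m)))) + 1 / 2 ^ m < rat_code r"
    using gapx[of i j m] m by (auto simp: abs_le_iff)
  then show ?thesis by (auto simp: ltc_iff)
qed

lemma dense_in_open: "open U \<Longrightarrow> z \<in> U \<Longrightarrow> \<exists>k. \<alpha> k \<in> U"
proof -
  assume "open U" "z \<in> U"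
  then obtain e where e: "e > 0" "ball z e \<subseteq> U" using open_contains_ball by blast
  have "z \<in> closure (range \<alpha>)" using dense by simp
  then have "\<forall>\<epsilon>>0. \<exists>k. dist (\<alpha> k) z < \<epsilon>" by (auto simp: closure_approachable)
  then obtain k where "dist (\<alpha> k) z < e" using e by blast
  then show ?thesis using e by (auto simp: dist_commute)
qed

lemma ball_code_eq: "ball_code \<alpha> v = ball (\<alpha> (fst (prod_decode v))) (rat_code (snd (prod_decode v)))"
  by (simp add: ball_code_def split: prod.splits)

lemma claim1:
  fixes p :: baire
  defines "As \<equiv> (\<lambda>i. - (\<Union>k. ball_code \<alpha> (p (prod_encode (i, k)))))"
  assumes x: "Suc x \<notin> range (Kbct gt p)"
  shows "interior (As (xn x)) \<noteq> {}"
proof -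
  have K0: "Kb gt x w (p (prod_encode (xn x, wj w))) = 0" for w
  proof -
    have "Kbct gt p (prod_encode (x, w)) \<noteq> Suc x" using x by (metis rangeI)
    then show ?thesis by (auto simp: Kbct_def Kb_def idx_def split: if_splits)
  qed
  have Rpos: "0 < rat_code (xr x)"
    using K0[of 0] by (auto simp: Kb_def rat_code_pos_iff split: if_splits)
  have sub: "ball (\<alpha> (xc x)) (rat_code (xr x)) \<subseteq> As (xn x)"
  proof
    fix z assume z: "z \<in> ball (\<alpha> (xc x)) (rat_code (xr x))"
    show "z \<in> As (xn x)"
    proof (rule ccontr)
      assume "z \<notin> As (xn x)"
      then obtain j where j: "z \<in> ball_code \<alpha> (p (prod_encode (xn x, j)))" unfolding As_def by auto
      define v where "v = p (prod_encode (xn x, j))"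
      have "open (ball (\<alpha> (xc x)) (rat_code (xr x)) \<inter> ball_code \<alpha> v)" by (simp add: ball_code_eq open_Int)
      then obtain k where k: "\<alpha> k \<in> ball (\<alpha> (xc x)) (rat_code (xr x))" "\<alpha> k \<in> ball_code \<alpha> v"
        using dense_in_open[of _ z] z j unfolding v_def by blast
      obtain m1 where m1: "ltc (gt (prod_encode (k, prod_encode (xc x, m1)))) m1 (xr x)"
        using ltc_complete[of k "xc x" "xr x"] k(1) by (auto simp: dist_commute)
      obtain m2 where m2: "ltc (gt (prod_encode (k, prod_encode (fst (prod_decode v), m2)))) m2 (snd (prod_decode v))"
        using ltc_complete[of k "fst (prod_decode v)" "snd (prod_decode v)"] k(2) by (auto simp: dist_commute ball_code_eq)
      have "Kb gt x (prod_encode (j, prod_encode (k, prod_encode (m1, m2)))) (p (prod_encode (xn x, j))) = Suc x"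
        using m1 m2 unfolding Kb_def v_def sel_w by simp
      then show False using K0[of "prod_encode (j, prod_encode (k, prod_encode (m1, m2)))"] by (simp add: sel_w)
    qed
  qed
  have "\<alpha> (xc x) \<in> interior (As (xn x))"
    using sub Rpos interior_maximal[OF sub] by auto
  then show ?thesis by auto
qed

lemma claim2:
  fixes p :: baire
  defines "As \<equiv> (\<lambda>i. - (\<Union>k. ball_code \<alpha> (p (prod_encode (i, k)))))"
  assumes cov: "(\<Union>i. As i) = UNIV"
  shows "\<exists>x. Suc x \<notin> range (Kbct gt p)"
proof -
  have cl: "closed (As i)" for i
    unfolding As_def by (intro closed_Compl open_UN) (auto simp: ball_code_eq)
  have "\<exists>n. interior (As n) \<noteq> {}"
  proof (rule ccontr)
    assume "\<not> ?thesis"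
    then have "euclidean interior_of \<Union> (range As) = {}"
      by (intro Baire_category_alt) (auto simp: completely_metrizable_space_euclidean cl closed_closedin[symmetric]
          euclidean_interior_of)
    then show False using cov by (simp add: euclidean_interior_of)
  qed
  then obtain n y where "y \<in> interior (As n)" by auto
  then obtain e where e: "e > 0" "ball y e \<subseteq> As n" by (auto simp: mem_interior)
  obtain N :: nat where N: "real N > 2 / e" using reals_Archimedean2 by blast
  have rN: "1 / real (Suc N) < e / 2"
  proof -
    have "2 / e < real (Suc N)" using N by simp
    then show ?thesis using e by (simp add: field_simps)
  qed
  have "y \<in> closure (range \<alpha>)" using dense by simp
  then have "\<forall>\<epsilon>>0. \<exists>k. dist (\<alpha> k) y < \<epsilon>" by (auto simp: closure_approachable)
  then obtain c where c: "dist (\<alpha> c) y < e / 2" using e by (meson half_gt_zero)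
  define x where "x = prod_encode (n, prod_encode (c, prod_encode (2, N)))"
  have xs: "xn x = n" "xc x = c" "xr x = prod_encode (2, N)" unfolding x_def sel_x by simp_all
  have sub: "ball (\<alpha> c) (1 / real (Suc N)) \<subseteq> As n"
  proof -
    have "ball (\<alpha> c) (1 / real (Suc N)) \<subseteq> ball y e"
    proof
      fix z assume "z \<in> ball (\<alpha> c) (1 / real (Suc N))"
      then have "dist (\<alpha> c) z < e / 2" using rN by simp
      then show "z \<in> ball y e" using c dist_triangle[of y z "\<alpha> c"] by (simp add: dist_commute)
    qed
    then show ?thesis using e by blast
  qed
  have "Kbct gt p t \<noteq> Suc x" for t
  proof
    assume K: "Kbct gt p t = Suc x"
    then have tx: "fst (prod_decode t) = x" by (auto simp: Kbct_def Kb_def split: if_splits)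
    define w where "w = snd (prod_decode t)"
    define v where "v = p (prod_encode (n, wj w))"
    have ip: "0 < ipos (fst (prod_decode (xr x)))" using xs by (simp add: ipos_def)
    have l: "ltc (gt (prod_encode (wk w, prod_encode (c, wm1 w)))) (wm1 w) (xr x)"
       "ltc (gt (prod_encode (wk w, prod_encode (fst (prod_decode v), wm2 w)))) (wm2 w) (snd (prod_decode v))"
      using K ip unfolding Kbct_def idx_def tx w_def[symmetric] v_def xs
      by (auto simp: Kb_def xs split: if_splits)
    have "\<alpha> (wk w) \<in> As n"
      using ltc_sound[OF l(1)] sub xs by (auto simp: rat_code_inv dist_commute)
    moreover have "\<alpha> (wk w) \<in> ball_code \<alpha> v"
      using ltc_sound[OF l(2)] by (auto simp: ball_code_eq dist_commute)
    ultimately show False unfolding As_def v_def by auto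
  qed
  then show ?thesis by (metis imageE)
qed

end



lemma BCT_le_CN:
  fixes \<alpha> :: "nat \<Rightarrow> 'a::complete_space"
  assumes cms: "computable_metric_space \<alpha>"
  shows "weihrauch_le (delta_closed_seq \<alpha>) delta_nat BCT_dom BCT delta_closed_nat delta_nat CN_dom CN"
proof -
  have dense: "closure (range \<alpha>) = UNIV" using cms by (simp add: computable_metric_space_def)
  obtain g where gc: "computable_nat_fun g" and gp: "\<And>i j k. \<exists>v. g (prod_encode (i, prod_encode (j, k))) = Some v \<and>
                    \<bar>dist (\<alpha> i) (\<alpha> j) - rat_code v\<bar> \<le> 1 / 2 ^ k"
    using cms unfolding computable_metric_space_def by blast
  define gt where "gt x = the (g x)" for x
  have gtot: "g x = Some (gt x)" for x
  proof -
    obtain i y where x: "x = prod_encode (i, y)" by (metis prod_decode_inverse surj_pair)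
    obtain j k where y: "y = prod_encode (j, k)" by (metis prod_decode_inverse surj_pair)
    show ?thesis using gp[of i j k] unfolding x y gt_def by auto
  qed
  have gapx: "\<bar>dist (\<alpha> i) (\<alpha> j) - rat_code (gt (prod_encode (i, prod_encode (j, k))))\<bar> \<le> 1 / 2 ^ k" for i j k
    using gp[of i j k] gtot by auto
  have gprc: "prc 1 (\<lambda>xs. gt (xs!0))"
  proof -
    have "partrec 1 (\<lambda>xs. g (hd xs))" using gc by (simp add: computable_nat_fun_def)
    then have "prc 1 (\<lambda>xs. gt (hd xs))" unfolding prc_def gtot .
    then show ?thesis by (rule prc_ext) (auto simp: length_Suc_conv)
  qed
  show ?thesis
    unfolding weihrauch_le_def
  proof (intro exI conjI allI impI)
    show "computable_baire (\<lambda>s. Some (\<lambda>i. fst (prod_decode (s 1))))" by (rule computable_H2)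
    show "computable_baire (\<lambda>p. Some (Kbct gt p))" by (rule computable_Kbct[OF gprc])
    fix G
    assume G: "realizer delta_closed_nat delta_nat CN_dom CN G"
    show "realizer (delta_closed_seq \<alpha>) delta_nat BCT_dom BCT
            (\<lambda>p. case Some (Kbct gt p) of None \<Rightarrow> None
                 | Some q \<Rightarrow> (case G q of None \<Rightarrow> None | Some r \<Rightarrow> Some (\<lambda>i. fst (prod_decode (bpair p r 1)))))"
      unfolding realizer_def
    proof (intro allI impI, elim conjE)
      fix p As
      assume As: "delta_closed_seq \<alpha> p = Some As" "As \<in> BCT_dom"
      then have As': "As = (\<lambda>i. - (\<Union>k. ball_code \<alpha> (p (prod_encode (i, k)))))"
        by (auto simp: delta_closed_seq_def)
      have cov: "(\<Union>i. - (\<Union>k. ball_code \<alpha> (p (prod_encode (i, k))))) = UNIV"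
        using As unfolding As' BCT_dom_def by auto
      define A where "A = {x. Suc x \<notin> range (Kbct gt p)}"
      have dA: "delta_closed_nat (Kbct gt p) = Some A" by (simp add: delta_closed_nat_def A_def)
      have "A \<in> CN_dom"
        using claim2[of \<alpha> gt, OF dense gapx cov] by (auto simp: CN_dom_def A_def)
      then obtain r y where r: "G (Kbct gt p) = Some r" "delta_nat r = Some y" "y \<in> CN A"
        using G dA unfolding realizer_def by blast
      then have r0: "Suc (r 0) \<notin> range (Kbct gt p)" by (auto simp: delta_nat_def CN_def A_def)
      have "xn (r 0) \<in> BCT As"
        using claim1[of \<alpha> gt, OF dense gapx r0] unfolding As' BCT_def by simp
      then show "\<exists>q y. (case Some (Kbct gt p) of None \<Rightarrow> None
                 | Some q \<Rightarrow> (case G q of None \<Rightarrow> None | Some r \<Rightarrow> Some (\<lambda>i. fst (prod_decode (bpair p r 1))))) = Some q \<and>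
             delta_nat q = Some y \<and> y \<in> BCT As"
        using r by (auto simp: bpair_1 delta_nat_def xn_def)
    qed
  qed
qed

theorem theorem5p2:
  fixes \<alpha> :: "nat \<Rightarrow> 'a::complete_space"
  assumes "computable_metric_space \<alpha>"
  shows "weihrauch_equiv (delta_closed_seq \<alpha>) delta_nat (BCT_dom :: (nat \<Rightarrow> 'a set) set) BCT
                         delta_closed_nat delta_nat CN_dom CN"
  unfolding weihrauch_equiv_def using BCT_le_CN[OF assms] CN_le_BCT by blast

end
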